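(* Let $G=(V,E)$ be a connected cograph with at least two vertices. Then $|\mathrm{core}(G)|\le 1$, and if $\mathrm{core}(G)=\{w\}$ then $\gamma(G-w)>\gamma(G)$ (i.e. $\mathrm{core}(G)\subseteq V^+$).
   Context: All graphs are finite, simple and undirected. A cograph is a graph with no induced path on four vertices ($P_4$-free graph). $\gamma(G)$ is the domination number; a minimum dominating set (mds) is a dominating set of size $\gamma(G)$; $\mathrm{core}(G)$ is the set of vertices in every mds. $G-w$ is $G$ with $w$ deleted and $V^+=\{v:\gamma(G-v)>\gamma(G)\}$. *)

theory Defs
  imports Main
begin

definition graph :: "'a set \<Rightarrow> ('a \<Rightarrow> 'a \<Rightarrow> bool) \<Rightarrow> bool" where
  "graph V E \<longleftrightarrow> finite V \<and> (\<forall>u v. E u v \<longrightarrow> u \<in> V \<and> v \<in> V) \<and>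
     (\<forall>u v. E u v \<longrightarrow> E v u) \<and> (\<forall>v. \<not> E v v)"

inductive reachable :: "'a set \<Rightarrow> ('a \<Rightarrow> 'a \<Rightarrow> bool) \<Rightarrow> 'a \<Rightarrow> 'a \<Rightarrow> bool"
  for V E where
  refl: "v \<in> V \<Longrightarrow> reachable V E v v"
| step: "reachable V E u v \<Longrightarrow> E v w \<Longrightarrow> w \<in> V \<Longrightarrow> reachable V E u w"

definition connected_graph :: "'a set \<Rightarrow> ('a \<Rightarrow> 'a \<Rightarrow> bool) \<Rightarrow> bool" where
  "connected_graph V E \<longleftrightarrow> V \<noteq> {} \<and> (\<forall>u\<in>V. \<forall>v\<in>V. reachable V E u v)"

definition induced_P4 :: "'a set \<Rightarrow> ('a \<Rightarrow> 'a \<Rightarrow> bool) \<Rightarrow> 'a \<Rightarrow> 'a \<Rightarrow> 'a \<Rightarrow> 'a \<Rightarrow> bool" where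
  "induced_P4 V E a b c d \<longleftrightarrow> a \<in> V \<and> b \<in> V \<and> c \<in> V \<and> d \<in> V \<and>
     distinct [a, b, c, d] \<and> E a b \<and> E b c \<and> E c d \<and> \<not> E a c \<and> \<not> E a d \<and> \<not> E b d"

definition cograph :: "'a set \<Rightarrow> ('a \<Rightarrow> 'a \<Rightarrow> bool) \<Rightarrow> bool" where
  "cograph V E \<longleftrightarrow> graph V E \<and> \<not> (\<exists>a b c d. induced_P4 V E a b c d)"

definition dominating_set :: "'a set \<Rightarrow> ('a \<Rightarrow> 'a \<Rightarrow> bool) \<Rightarrow> 'a set \<Rightarrow> bool" where
  "dominating_set V E D \<longleftrightarrow> D \<subseteq> V \<and> (\<forall>v\<in>V. v \<in> D \<or> (\<exists>u\<in>D. E u v))"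

definition domination_number :: "'a set \<Rightarrow> ('a \<Rightarrow> 'a \<Rightarrow> bool) \<Rightarrow> nat" where
  "domination_number V E = (LEAST k. \<exists>D. dominating_set V E D \<and> card D = k)"

definition min_dominating_set :: "'a set \<Rightarrow> ('a \<Rightarrow> 'a \<Rightarrow> bool) \<Rightarrow> 'a set \<Rightarrow> bool" where
  "min_dominating_set V E D \<longleftrightarrow> dominating_set V E D \<and> card D = domination_number V E"

definition core :: "'a set \<Rightarrow> ('a \<Rightarrow> 'a \<Rightarrow> bool) \<Rightarrow> 'a set" where
  "core V E = {v \<in> V. \<forall>D. min_dominating_set V E D \<longrightarrow> v \<in> D}"

definition del_vertex_V :: "'a set \<Rightarrow> 'a \<Rightarrow> 'a set" where
  "del_vertex_V V w = V - {w}"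

definition del_vertex_E :: "('a \<Rightarrow> 'a \<Rightarrow> bool) \<Rightarrow> 'a \<Rightarrow> 'a \<Rightarrow> 'a \<Rightarrow> bool" where
  "del_vertex_E E w = (\<lambda>u v. E u v \<and> u \<noteq> w \<and> v \<noteq> w)"

definition V_plus :: "'a set \<Rightarrow> ('a \<Rightarrow> 'a \<Rightarrow> bool) \<Rightarrow> 'a set" where
  "V_plus V E = {v \<in> V. domination_number (del_vertex_V V v) (del_vertex_E E v) > domination_number V E}"

end

theory Submission
  imports Defs
begin

definition gcompl :: "'a set \<Rightarrow> ('a \<Rightarrow> 'a \<Rightarrow> bool) \<Rightarrow> 'a \<Rightarrow> 'a \<Rightarrow> bool" where
  "gcompl V E u v \<longleftrightarrow> u \<in> V \<and> v \<in> V \<and> u \<noteq> v \<and> \<not> E u v"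

lemma reach_in: "reachable V E u v \<Longrightarrow> u \<in> V \<and> v \<in> V"
  by (induction rule: reachable.induct) auto

lemma reach_trans: "reachable V E v w \<Longrightarrow> reachable V E u v \<Longrightarrow> reachable V E u w"
  by (induction rule: reachable.induct) (auto intro: reachable.step)

lemma reach_single: "u \<in> V \<Longrightarrow> E u w \<Longrightarrow> w \<in> V \<Longrightarrow> reachable V E u w"
  by (meson reachable.refl reachable.step)

lemma reach_sym:
  assumes "\<forall>u v. E u v \<longrightarrow> E v u" "reachable V E u v"
  shows "reachable V E v u"
  using assms(2)
proof (induction rule: reachable.induct)
  case (refl v) then show ?case by (rule reachable.refl)
next
  case (step u v w)
  have "reachable V E w v" using step reach_in[OF step(1)] assms(1) by (auto intro: reach_single)
  then show ?case using step reach_trans by metis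
qed

lemma last_step: "reachable W F u w \<Longrightarrow> u \<noteq> w \<Longrightarrow> \<exists>v. F v w \<and> v \<in> W"
  by (erule reachable.cases) (auto dest: reach_in)

lemma reach_exit:
  assumes "reachable V E u w" "u \<noteq> x"
  shows "reachable (V-{x}) (del_vertex_E E x) u w \<or>
         (\<exists>z. E z x \<and> reachable (V-{x}) (del_vertex_E E x) u z)"
  using assms
proof (induction rule: reachable.induct)
  case (refl v) then show ?case by (auto intro: reachable.refl)
next
  case (step u v w)
  show ?case
  proof (cases "\<exists>z. E z x \<and> reachable (V-{x}) (del_vertex_E E x) u z")
    case True then show ?thesis by blast
  next
    case False
    with step have r: "reachable (V-{x}) (del_vertex_E E x) u v" by blast
    hence "v \<noteq> x" using reach_in by fastforce
    show ?thesis
    proof (cases "w = x")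
      case True then show ?thesis using r step by blast
    next
      case False
      then have "reachable (V-{x}) (del_vertex_E E x) u w"
        using r step \<open>v \<noteq> x\<close> by (auto intro: reachable.step simp: del_vertex_E_def)
      then show ?thesis by blast
    qed
  qed
qed

lemma reach_boundary:
  assumes "reachable W F y z" "\<not> P y" "P z"
  shows "\<exists>a b. reachable W F y a \<and> F a b \<and> b \<in> W \<and> \<not> P a \<and> P b"
  using assms
proof (induction rule: reachable.induct)
  case (refl v) then show ?case by blast
next
  case (step u v w)
  then show ?case by (cases "P v") auto
qed

lemma key:
  assumes g: "graph V E" and nop4: "\<not>(\<exists>a b c d. induced_P4 V E a b c d)"
    and cG: "connected_graph V E" and cH: "connected_graph V (gcompl V E)"
    and x: "x \<in> V" and nc: "\<not> connected_graph (V-{x}) (del_vertex_E E x)"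
    and ne: "V - {x} \<noteq> {}"
  shows False
proof -
  let ?V = "V-{x}" and ?E = "del_vertex_E E x"
  have symE: "\<forall>u v. E u v \<longrightarrow> E v u" and irr: "\<forall>v. \<not> E v v"
    and inV: "\<forall>u v. E u v \<longrightarrow> u \<in> V \<and> v \<in> V" using g by (auto simp: graph_def)
  have symE': "\<forall>u v. ?E u v \<longrightarrow> ?E v u" using symE by (auto simp: del_vertex_E_def)
  obtain p q where pq: "p \<in> ?V" "q \<in> ?V" "\<not> reachable ?V ?E p q"
    using nc ne unfolding connected_graph_def by blast
  have "reachable V (gcompl V E) p x" using cH pq x unfolding connected_graph_def by blast
  then obtain y where y: "gcompl V E y x" using pq last_step[of V "gcompl V E" p x] by blast
  hence yV: "y \<in> V" "y \<noteq> x" "\<not> E y x" by (auto simp: gcompl_def)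
  obtain r where r: "r \<in> ?V" "\<not> reachable ?V ?E y r"
  proof -
    have "\<not> reachable ?V ?E y p \<or> \<not> reachable ?V ?E y q"
      using pq reach_sym[OF symE', of ?V y p] reach_trans[of ?V ?E y q p] by blast
    then show ?thesis using that pq by blast
  qed
  have "reachable V E y x" using cG yV x unfolding connected_graph_def by blast
  from reach_exit[OF this yV(2)] obtain z1 where z1: "E z1 x" "reachable ?V ?E y z1"
    using reach_in[of ?V ?E y x] by blast
  have "reachable V E r x" using cG r x unfolding connected_graph_def by blast
  have "r \<noteq> x" using r by blast
  from reach_exit[OF \<open>reachable V E r x\<close> this] obtain z2 where z2: "E z2 x" "reachable ?V ?E r z2"
    using reach_in[of ?V ?E r x] by blast
  from reach_boundary[of ?V ?E y z1 "\<lambda>v. E v x", OF z1(2) yV(3) z1(1)]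
  obtain a b where ab: "reachable ?V ?E y a" "?E a b" "b \<in> ?V" "\<not> E a x" "E b x" by (elim exE conjE) simp
  have yb: "reachable ?V ?E y b" using ab(1-3) by (rule reachable.step)
  have noreach: "\<not> reachable ?V ?E y z2"
  proof
    assume "reachable ?V ?E y z2"
    moreover have "reachable ?V ?E z2 r" using reach_sym[OF symE' z2(2)] .
    ultimately have "reachable ?V ?E y r" using reach_trans by metis
    with r show False by blast
  qed
  have aV: "a \<in> ?V" using reach_in[OF ab(1)] by simp
  have z2V: "z2 \<in> ?V" using reach_in[OF z2(2)] by simp
  have "induced_P4 V E a b x z2"
    unfolding induced_P4_def
  proof (intro conjI)
    show "a \<in> V" "b \<in> V" "x \<in> V" "z2 \<in> V" using aV ab z2V x by auto
    show "E a b" using ab by (simp add: del_vertex_E_def)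
    show "E b x" by fact
    show "E x z2" using z2 symE by blast
    show "\<not> E a x" by fact
    show "\<not> E a z2"
    proof
      assume "E a z2"
      hence "?E a z2" using aV z2V by (simp add: del_vertex_E_def)
      hence "reachable ?V ?E y z2" using ab(1) z2V by (auto intro: reachable.step)
      with noreach show False by blast
    qed
    show "\<not> E b z2"
    proof
      assume "E b z2"
      hence "?E b z2" using ab z2V by (simp add: del_vertex_E_def)
      hence "reachable ?V ?E y z2" using yb z2V by (auto intro: reachable.step)
      with noreach show False by blast
    qed
    have "b \<noteq> z2" using yb noreach by blast
    moreover have "a \<noteq> b" using ab irr by (auto simp: del_vertex_E_def)
    moreover have "a \<noteq> z2" using ab z2 by blast
    moreover have "x \<noteq> z2" using z2 irr by blast
    ultimately show "distinct [a, b, x, z2]" using aV ab(3) by auto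
  qed
  with nop4 show False by blast
qed

lemma gcompl_graph: "graph V E \<Longrightarrow> graph V (gcompl V E)"
  unfolding graph_def gcompl_def by auto

lemma gcompl_gcompl: "graph V E \<Longrightarrow> gcompl V (gcompl V E) = E"
  unfolding graph_def gcompl_def by (intro ext) auto

lemma gcompl_nop4:
  assumes "graph V E" "\<not>(\<exists>a b c d. induced_P4 V E a b c d)"
  shows "\<not>(\<exists>a b c d. induced_P4 V (gcompl V E) a b c d)"
proof
  assume "\<exists>a b c d. induced_P4 V (gcompl V E) a b c d"
  then obtain a b c d where "induced_P4 V (gcompl V E) a b c d" by blast
  hence "induced_P4 V E c a d b" using assms(1)
    unfolding induced_P4_def gcompl_def graph_def by auto
  with assms(2) show False by blast
qed

lemma del_gcompl: "gcompl (V-{x}) (del_vertex_E E x) = del_vertex_E (gcompl V E) x"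
  unfolding gcompl_def del_vertex_E_def by (intro ext) auto

lemma main_lemma:
  "graph V E \<Longrightarrow> \<not>(\<exists>a b c d. induced_P4 V E a b c d) \<Longrightarrow> card V \<ge> 2 \<Longrightarrow>
   connected_graph V E \<Longrightarrow> connected_graph V (gcompl V E) \<Longrightarrow> False"
proof (induction "card V" arbitrary: V E rule: less_induct)
  case less
  show False
  proof (cases "card V = 2")
    case True
    then obtain p q where V: "V = {p, q}" "p \<noteq> q" by (meson card_2_iff)
    have irr: "\<forall>v. \<not> E v v" using less(2) unfolding graph_def by blast
    have "reachable V E p q" using less(5) V unfolding connected_graph_def by blast
    from last_step[OF this V(2)] obtain v where v: "E v q" "v \<in> V" by blast
    have "v \<noteq> q" using v irr by blast
    hence "v = p" using v V by blast
    with v have epq: "E p q" by simp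
    have "reachable V (gcompl V E) p q" using less(6) V unfolding connected_graph_def by blast
    from last_step[OF this V(2)] obtain v' where v': "gcompl V E v' q" "v' \<in> V" by blast
    have "v' \<noteq> q" using v' unfolding gcompl_def by blast
    hence "v' = p" using v' V by blast
    with v' have "\<not> E p q" unfolding gcompl_def by simp
    with epq show False by blast
  next
    case False
    with less(4) have c3: "card V \<ge> 3" by auto
    hence "V \<noteq> {}" by auto
    then obtain x where x: "x \<in> V" by blast
    have fin: "finite V" using less(2) by (simp add: graph_def)
    have cV': "card (V-{x}) = card V - 1" using x fin by simp
    have g': "graph (V-{x}) (del_vertex_E E x)"
      using less(2) unfolding graph_def del_vertex_E_def by auto
    have np': "\<not>(\<exists>a b c d. induced_P4 (V-{x}) (del_vertex_E E x) a b c d)"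
    proof
      assume "\<exists>a b c d. induced_P4 (V-{x}) (del_vertex_E E x) a b c d"
      then obtain a b c d where "induced_P4 (V-{x}) (del_vertex_E E x) a b c d" by blast
      hence "induced_P4 V E a b c d" unfolding induced_P4_def del_vertex_E_def by auto
      with less(3) show False by blast
    qed
    have lt: "card (V-{x}) < card V" using cV' c3 by simp
    have ge: "2 \<le> card (V-{x})" using cV' c3 by simp
    have ne: "V - {x} \<noteq> {}" using ge by (metis card.empty not_numeral_le_zero)
    show False
    proof (cases "connected_graph (V-{x}) (del_vertex_E E x)")
      case False
      then show False using key[OF less(2,3,5,6) x _ ne] by blast
    next
      case True
      have "\<not> connected_graph (V-{x}) (gcompl (V-{x}) (del_vertex_E E x))"
        using less(1)[OF lt g' np' ge True] by blast
      hence nc: "\<not> connected_graph (V-{x}) (del_vertex_E (gcompl V E) x)" by (simp add: del_gcompl)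
      have cc: "connected_graph V (gcompl V (gcompl V E))"
        using less(5) gcompl_gcompl[OF less(2)] by simp
      show False
        using key[OF gcompl_graph[OF less(2)] gcompl_nop4[OF less(2,3)] less(6) cc x nc ne] .
    qed
  qed
qed

lemma decomp:
  assumes "cograph V E" "connected_graph V E" "card V \<ge> 2"
  shows "\<exists>A B. A \<union> B = V \<and> A \<inter> B = {} \<and> A \<noteq> {} \<and> B \<noteq> {} \<and> (\<forall>a\<in>A. \<forall>b\<in>B. E a b)"
proof -
  have g: "graph V E" and np: "\<not>(\<exists>a b c d. induced_P4 V E a b c d)"
    using assms(1) by (auto simp: cograph_def)
  have "\<not> connected_graph V (gcompl V E)" using main_lemma[OF g np assms(3,2)] by blast
  moreover have "V \<noteq> {}" using assms(2) by (simp add: connected_graph_def)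
  ultimately obtain p q where pq: "p \<in> V" "q \<in> V" "\<not> reachable V (gcompl V E) p q"
    unfolding connected_graph_def by blast
  define A where "A = {u. reachable V (gcompl V E) p u}"
  have "p \<in> A" using pq by (auto simp: A_def intro: reachable.refl)
  moreover have "A \<subseteq> V" using reach_in by (fastforce simp: A_def)
  moreover have "q \<in> V - A" using pq by (auto simp: A_def)
  moreover have "\<forall>a\<in>A. \<forall>b\<in>V-A. E a b"
  proof (intro ballI)
    fix a b assume a: "a \<in> A" and b: "b \<in> V - A"
    show "E a b"
    proof (rule ccontr)
      assume "\<not> E a b"
      moreover have "a \<noteq> b" using a b by auto
      ultimately have "gcompl V E a b" using a b \<open>A \<subseteq> V\<close> by (auto simp: gcompl_def)
      hence "b \<in> A" using a b by (auto simp: A_def intro: reachable.step)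
      with b show False by blast
    qed
  qed
  ultimately show ?thesis by (intro exI[of _ A] exI[of _ "V - A"]) auto
qed

lemma dn_le: "dominating_set V E D \<Longrightarrow> domination_number V E \<le> card D"
  unfolding domination_number_def by (rule Least_le) blast

lemma dn_ex: "\<exists>D. dominating_set V E D \<and> card D = domination_number V E"
  unfolding domination_number_def
  by (rule LeastI_ex, rule exI[of _ "card V"], rule exI[of _ V]) (simp add: dominating_set_def)

lemma dom_card_pos: "dominating_set V E D \<Longrightarrow> V \<noteq> {} \<Longrightarrow> finite V \<Longrightarrow> card D \<ge> 1"
proof -
  assume d: "dominating_set V E D" and ne: "V \<noteq> {}" and f: "finite V"
  then obtain v where "v \<in> V" by blast
  hence "D \<noteq> {}" using d unfolding dominating_set_def by blast
  moreover have "finite D" using d f finite_subset unfolding dominating_set_def by blast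
  ultimately show "card D \<ge> 1" by (simp add: Suc_le_eq card_gt_0_iff)
qed

lemma dom_card1: "dominating_set V E D \<Longrightarrow> card D = 1 \<Longrightarrow>
   \<exists>u. D = {u} \<and> u \<in> V \<and> (\<forall>v\<in>V. v \<noteq> u \<longrightarrow> E u v)"
  unfolding dominating_set_def by (auto simp: card_1_singleton_iff)

theorem proposition3:
  fixes V :: "'a set" and E :: "'a \<Rightarrow> 'a \<Rightarrow> bool"
  assumes "cograph V E" and "connected_graph V E" and "card V \<ge> 2"
  shows "card (core V E) \<le> 1 \<and>
         (\<forall>w. core V E = {w} \<longrightarrow>
            domination_number (del_vertex_V V w) (del_vertex_E E w) > domination_number V E)"
proof -
  have g: "graph V E" using assms(1) by (simp add: cograph_def)
  have fin: "finite V" and symE: "\<forall>u v. E u v \<longrightarrow> E v u"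
    using g by (auto simp: graph_def)
  have Vne: "V \<noteq> {}" using assms(3) by auto
  have gpos: "domination_number V E \<ge> 1"
  proof -
    obtain D where D: "dominating_set V E D" "card D = domination_number V E" using dn_ex by blast
    show ?thesis using dom_card_pos[OF D(1) Vne fin] D(2) by simp
  qed
  show ?thesis
  proof (cases "\<exists>u\<in>V. \<forall>v\<in>V. v \<noteq> u \<longrightarrow> E u v")
    case True
    then obtain u where u: "u \<in> V" "\<forall>v\<in>V. v \<noteq> u \<longrightarrow> E u v" by blast
    have domU: "dominating_set V E {u}" using u by (auto simp: dominating_set_def)
    have g1: "domination_number V E = 1" using dn_le[OF domU] gpos by simp
    have mU: "min_dominating_set V E {u}" using domU g1 by (simp add: min_dominating_set_def)
    have cs: "core V E \<subseteq> {u}" using mU by (auto simp: core_def)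
    have c1: "card (core V E) \<le> 1" using card_mono[OF _ cs] by simp
    have "\<forall>w. core V E = {w} \<longrightarrow>
            domination_number (del_vertex_V V w) (del_vertex_E E w) > domination_number V E"
    proof (intro allI impI)
      fix w assume cw: "core V E = {w}"
      hence wu: "w = u" using cs by auto
      show "domination_number (del_vertex_V V w) (del_vertex_E E w) > domination_number V E"
      proof (rule ccontr)
        assume "\<not> ?thesis"
        hence le: "domination_number (V-{u}) (del_vertex_E E u) \<le> 1"
          using g1 wu by (simp add: del_vertex_V_def)
        obtain D where D: "dominating_set (V-{u}) (del_vertex_E E u) D"
          "card D = domination_number (V-{u}) (del_vertex_E E u)" using dn_ex by blast
        have "card (V - {u}) = card V - 1" using fin u by simp
        hence "card (V - {u}) \<ge> 1" using assms(3) by simp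
        hence "V - {u} \<noteq> {}" by (metis card.empty not_one_le_zero)
        hence "card D \<ge> 1" using dom_card_pos[OF D(1)] fin by simp
        with le D have "card D = 1" by simp
        from dom_card1[OF D(1) this] obtain u' where u': "D = {u'}" "u' \<in> V - {u}"
          "\<forall>v\<in>V-{u}. v \<noteq> u' \<longrightarrow> del_vertex_E E u u' v" by blast
        have "dominating_set V E {u'}"
          using u' u symE unfolding dominating_set_def del_vertex_E_def by auto
        hence "min_dominating_set V E {u'}" using g1 by (simp add: min_dominating_set_def)
        moreover have "u \<in> core V E" using cw wu by simp
        ultimately show False using u' by (auto simp: core_def)
      qed
    qed
    with c1 show ?thesis by blast
  next
    case False
    obtain A B where AB: "A \<union> B = V" "A \<inter> B = {}" "A \<noteq> {}" "B \<noteq> {}" "\<forall>a\<in>A. \<forall>b\<in>B. E a b"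
      using decomp[OF assms] by blast
    obtain a1 where a1: "a1 \<in> A" using AB by blast
    obtain a2 where a2: "a2 \<in> A" "a2 \<noteq> a1"
    proof -
      have "\<not> (\<forall>v\<in>V. v \<noteq> a1 \<longrightarrow> E a1 v)" using False a1 AB by blast
      then obtain v where "v \<in> V" "v \<noteq> a1" "\<not> E a1 v" by blast
      then show ?thesis using that a1 AB by blast
    qed
    obtain b1 where b1: "b1 \<in> B" using AB by blast
    obtain b2 where b2: "b2 \<in> B" "b2 \<noteq> b1"
    proof -
      have "\<not> (\<forall>v\<in>V. v \<noteq> b1 \<longrightarrow> E b1 v)" using False b1 AB by blast
      then obtain v where "v \<in> V" "v \<noteq> b1" "\<not> E b1 v" by blast
      then show ?thesis using that b1 AB symE by blast
    qed
    have dom2: "dominating_set V E {a, b}" if ab: "a \<in> A" "b \<in> B" for a b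
      unfolding dominating_set_def
    proof (intro conjI ballI)
      show "{a, b} \<subseteq> V" using ab AB(1) by blast
      fix v assume "v \<in> V"
      hence "v \<in> A \<or> v \<in> B" using AB(1) by blast
      then show "v \<in> {a, b} \<or> (\<exists>u\<in>{a, b}. E u v)"
      proof
        assume "v \<in> A" hence "E v b" using AB(5) ab by blast
        hence "E b v" using symE by blast
        then show ?thesis by blast
      next
        assume "v \<in> B" hence "E a v" using AB(5) ab by blast
        then show ?thesis by blast
      qed
    qed
    have d1: "dominating_set V E {a1, b1}" using dom2 a1 b1 by blast
    have d2: "dominating_set V E {a2, b2}" using dom2 a2 b2 by blast
    have n1: "a1 \<noteq> b1" "a2 \<noteq> b2" "a1 \<noteq> b2" "a2 \<noteq> b1" using AB a1 a2 b1 b2 by auto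
    have c2: "card {a1, b1} = 2" "card {a2, b2} = 2" using n1 by auto
    have "domination_number V E \<noteq> 1"
    proof
      assume h: "domination_number V E = 1"
      obtain D where D: "dominating_set V E D" "card D = domination_number V E" using dn_ex by blast
      from dom_card1[OF D(1)] D h False show False by auto
    qed
    with gpos dn_le[OF d1] c2 have g2: "domination_number V E = 2" by simp
    have "min_dominating_set V E {a1, b1}" "min_dominating_set V E {a2, b2}"
      using d1 d2 c2 g2 by (auto simp: min_dominating_set_def)
    hence "core V E = {}" using n1 a2(2) b2(2) unfolding core_def by blast
    then show ?thesis by simp
  qed
qed

end
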